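(* Let $\xi(t)$, $t\geq0$, be a stochastically continuous real-valued stochastic process. Then $\xi$ is time-stable if and only if $$a\circ\xi_1+b\circ\xi_2\overset{d}{=}(a+b)\circ\xi$$ for all $a,b>0$, where $\xi_1,\xi_2$ are independent copies of $\xi$.
   Context: For a process $\eta$ on $[0,\infty)$ and $a>0$, $(a\circ\eta)(t)=\eta(at)$, $t\geq0$ (time scaling). $\overset{d}{=}$ denotes equality of all finite-dimensional distributions. A stochastically continuous real-valued process $\xi(t)$, $t\geq0$, is called time-stable if for each integer $n\geq2$, $\xi_1+\cdots+\xi_n\overset{d}{=}n\circ\xi$, where $\xi_1,\dots,\xi_n$ are i.i.d. copies of $\xi$. *)

theory Defs
  imports "HOL-Probability.Probability"
begin

text \<open>A real-valued process on [0,oo) is modelled as X :: real => 'a => real on a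
probability space M; only times t >= 0 matter.\<close>

definition fdd_eq :: "'a measure \<Rightarrow> (real \<Rightarrow> 'a \<Rightarrow> real) \<Rightarrow> 'b measure \<Rightarrow> (real \<Rightarrow> 'b \<Rightarrow> real) \<Rightarrow> bool" where
  "fdd_eq M X N Y \<longleftrightarrow>
     (\<forall>I. finite I \<and> I \<subseteq> {0..} \<longrightarrow>
        distr M (PiM I (\<lambda>_. borel)) (\<lambda>\<omega>. \<lambda>t\<in>I. X t \<omega>) =
        distr N (PiM I (\<lambda>_. borel)) (\<lambda>\<omega>. \<lambda>t\<in>I. Y t \<omega>))"

definition stoch_continuous :: "'a measure \<Rightarrow> (real \<Rightarrow> 'a \<Rightarrow> real) \<Rightarrow> bool" where
  "stoch_continuous M X \<longleftrightarrow>
     (\<forall>t\<ge>0. \<forall>\<epsilon>>0. ((\<lambda>s. measure M {\<omega>\<in>space M. \<bar>X s \<omega> - X t \<omega>\<bar> > \<epsilon>}) \<longlongrightarrow> 0) (at t within {0..}))"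

text \<open>Time-stability. The i.i.d. copies xi_1..xi_n are realised canonically on the
product space M^n: xi_i(omega) = X(omega_i).\<close>
definition time_stable :: "'a measure \<Rightarrow> (real \<Rightarrow> 'a \<Rightarrow> real) \<Rightarrow> bool" where
  "time_stable M X \<longleftrightarrow>
     (\<forall>n::nat. n \<ge> 2 \<longrightarrow>
        fdd_eq (PiM {..<n} (\<lambda>_. M)) (\<lambda>t \<omega>. \<Sum>i<n. X t (\<omega> i))
               M (\<lambda>t \<omega>. X (real n * t) \<omega>))"

end

theory Submission
  imports Defs "HOL-Probability.Probability"
begin


lemma char_unique_finite:
  fixes R1 R2 :: "real measure"
  assumes f1: "finite_measure R1" and f2: "finite_measure R2"
    and s1: "sets R1 = sets borel" and s2: "sets R2 = sets borel"
    and eq: "\<And>s. (CLINT x|R1. iexp (s*x)) = (CLINT x|R2. iexp (s*x))"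
  shows "R1 = R2"
proof -
  interpret A: finite_measure R1 by fact
  interpret B: finite_measure R2 by fact
  have sp1: "space R1 = UNIV" using sets_eq_imp_space_eq[OF s1] by simp
  have sp2: "space R2 = UNIV" using sets_eq_imp_space_eq[OF s2] by simp
  have "(CLINT x|R1. iexp (0*x)) = complex_of_real (measure R1 UNIV)"
    using sp1 by (simp add: scaleR_conv_of_real)
  moreover have "(CLINT x|R2. iexp (0*x)) = complex_of_real (measure R2 UNIV)"
    using sp2 by (simp add: scaleR_conv_of_real)
  ultimately have c: "measure R1 UNIV = measure R2 UNIV" using eq[of 0] by simp
  define c where "c = measure R1 UNIV"
  show ?thesis
  proof (cases "c = 0")
    case True
    show ?thesis
    proof (rule measure_eqI)
      fix A assume "A \<in> sets R1"
      have "emeasure R1 A \<le> emeasure R1 (space R1)" by (rule emeasure_space)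
      also have "\<dots> = ennreal c" using sp1 A.emeasure_eq_measure c_def by simp
      finally have z1: "emeasure R1 A = 0" using True by simp
      have "emeasure R2 A \<le> emeasure R2 (space R2)" by (rule emeasure_space)
      also have "\<dots> = ennreal c" using sp2 B.emeasure_eq_measure c_def c by simp
      finally have z2: "emeasure R2 A = 0" using True by simp
      from z1 z2 show "emeasure R1 A = emeasure R2 A" by simp
    qed (simp add: s1 s2)
  next
    case False
    then have cpos: "c > 0" using c_def measure_nonneg[of R1 UNIV] by linarith
    define P1 where "P1 = density R1 (\<lambda>_. ennreal (1/c))"
    define P2 where "P2 = density R2 (\<lambda>_. ennreal (1/c))"
    have rd1: "real_distribution P1"
      unfolding real_distribution_def real_distribution_axioms_def
    proof (intro conjI prob_spaceI)
      have "emeasure P1 (space P1) = ennreal (1/c) * emeasure R1 (space R1)"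
        unfolding P1_def by (simp add: emeasure_density_const)
      also have "\<dots> = ennreal (1/c) * ennreal c" using sp1 A.emeasure_eq_measure c_def by simp
      also have "\<dots> = 1" using cpos by (simp add: ennreal_mult''[symmetric] del: ennreal_mult'')
      finally show "emeasure P1 (space P1) = 1" .
    qed (simp add: P1_def s1)
    have rd2: "real_distribution P2"
      unfolding real_distribution_def real_distribution_axioms_def
    proof (intro conjI prob_spaceI)
      have "emeasure P2 (space P2) = ennreal (1/c) * emeasure R2 (space R2)"
        unfolding P2_def by (simp add: emeasure_density_const)
      also have "\<dots> = ennreal (1/c) * ennreal c" using sp2 B.emeasure_eq_measure c_def c by simp
      also have "\<dots> = 1" using cpos by (simp add: ennreal_mult''[symmetric] del: ennreal_mult'')
      finally show "emeasure P2 (space P2) = 1" .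
    qed (simp add: P2_def s2)
    have "char P1 = char P2"
    proof
      fix s
      have "(\<lambda>x. iexp (s*x)) \<in> borel_measurable borel"
        by (intro borel_measurable_continuous_onI continuous_intros)
      then have m1: "(\<lambda>x. iexp (s*x)) \<in> borel_measurable R1"
        and m2: "(\<lambda>x. iexp (s*x)) \<in> borel_measurable R2"
        by (auto simp only: measurable_cong_sets[OF s1 refl] measurable_cong_sets[OF s2 refl])
      have "char P1 s = (CLINT x|R1. (1/c) *\<^sub>R iexp (s*x))"
        unfolding char_def P1_def
        by (rule integral_density[OF m1]) (use cpos in auto)
      also have "\<dots> = (1/c) *\<^sub>R (CLINT x|R1. iexp (s*x))" by simp
      also have "\<dots> = (1/c) *\<^sub>R (CLINT x|R2. iexp (s*x))" using eq by simp
      also have "\<dots> = (CLINT x|R2. (1/c) *\<^sub>R iexp (s*x))" by simp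
      also have "\<dots> = char P2 s"
        unfolding char_def P2_def
        by (rule integral_density[OF m2, symmetric]) (use cpos in auto)
      finally show "char P1 s = char P2 s" .
    qed
    then have P: "P1 = P2" using Levy_uniqueness rd1 rd2 by blast
    show ?thesis
    proof (rule measure_eqI)
      fix A assume A: "A \<in> sets R1"
      then have A2: "A \<in> sets R2" using s1 s2 by simp
      have "emeasure R1 A = ennreal c * emeasure P1 A"
        unfolding P1_def using A cpos
        by (simp add: emeasure_density_const mult.assoc[symmetric] ennreal_mult''[symmetric] del: ennreal_mult'')
      also have "\<dots> = ennreal c * emeasure P2 A" using P by simp
      also have "\<dots> = emeasure R2 A"
        unfolding P2_def using A2 cpos
        by (simp add: emeasure_density_const mult.assoc[symmetric] ennreal_mult''[symmetric] del: ennreal_mult'')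
      finally show "emeasure R1 A = emeasure R2 A" .
    qed (simp add: s1 s2)
  qed
qed


definition wt :: "('i \<Rightarrow> real set) \<Rightarrow> 'i set \<Rightarrow> ('i \<Rightarrow> real) \<Rightarrow> real" where
  "wt A J y = (\<Prod>j\<in>J. indicator (A j) (y j))"

lemma wt_nonneg: "0 \<le> wt A J y"
  unfolding wt_def by (intro prod_nonneg) auto

lemma wt_le1: "wt A J y \<le> 1"
  unfolding wt_def by (intro prod_le_1) auto

lemma meas_wt:
  assumes "J \<subseteq> I" "\<And>j. j \<in> J \<Longrightarrow> A j \<in> sets borel"
  shows "wt A J \<in> borel_measurable (PiM I (\<lambda>_. borel))"
  unfolding wt_def
proof (intro borel_measurable_prod)
  fix j assume "j \<in> J"
  then have "j \<in> I" "A j \<in> sets borel" using assms by auto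
  then show "(\<lambda>y. indicator (A j) (y j) :: real) \<in> borel_measurable (PiM I (\<lambda>_. borel))"
    by (intro measurable_compose[OF measurable_component_singleton borel_measurable_indicator]) auto
qed

lemma meas_lin:
  assumes "K \<subseteq> I"
  shows "(\<lambda>y. \<Sum>l\<in>K. (u l::real) * y l) \<in> borel_measurable (PiM I (\<lambda>_. borel))"
proof (rule borel_measurable_sum)
  fix l assume "l \<in> K"
  then have "(\<lambda>y. y l) \<in> borel_measurable (PiM I (\<lambda>_. borel))"
    using assms by (intro measurable_component_singleton) auto
  then show "(\<lambda>y. u l * y l) \<in> borel_measurable (PiM I (\<lambda>_. borel))"
    by (intro borel_measurable_times borel_measurable_const)
qed

lemma integral_lin3_eval:
  fixes f1 f2 f3 :: "'a \<Rightarrow> real"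
  assumes "integrable M f1" "integrable M f2" "integrable M f3"
  shows "(\<integral>y. a * f1 y + b * f2 y + c * f3 y \<partial>M) = a * integral\<^sup>L M f1 + b * integral\<^sup>L M f2 + c * integral\<^sup>L M f3"
proof -
  have "(\<integral>y. a * f1 y + b * f2 y + c * f3 y \<partial>M) = (\<integral>y. a * f1 y + b * f2 y \<partial>M) + (\<integral>y. c * f3 y \<partial>M)"
    by (rule Bochner_Integration.integral_add) (use assms in auto)
  also have "(\<integral>y. a * f1 y + b * f2 y \<partial>M) = (\<integral>y. a * f1 y \<partial>M) + (\<integral>y. b * f2 y \<partial>M)"
    by (rule Bochner_Integration.integral_add) (use assms in auto)
  finally show ?thesis by simp
qed

lemma integral_lin3:
  fixes f1 f2 f3 :: "'a \<Rightarrow> real"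
  assumes "integrable M f1" "integrable M f2" "integrable M f3"
    "integrable N f1" "integrable N f2" "integrable N f3"
    "integral\<^sup>L M f1 = integral\<^sup>L N f1" "integral\<^sup>L M f2 = integral\<^sup>L N f2"
    "integral\<^sup>L M f3 = integral\<^sup>L N f3"
  shows "(\<integral>y. a * f1 y + b * f2 y + c * f3 y \<partial>M) = (\<integral>y. a * f1 y + b * f2 y + c * f3 y \<partial>N)"
  using assms by (simp add: integral_lin3_eval)

lemma iexp_split: "p *\<^sub>R iexp a = complex_of_real (p * cos a) + \<i> * complex_of_real (p * sin a)"
  by (simp add: cis_conv_exp[symmetric] complex_eq_iff)

lemma clint_split:
  fixes f g :: "'a \<Rightarrow> real"
  assumes "integrable M f" "integrable M g"
  shows "(\<integral>x. complex_of_real (f x) + \<i> * complex_of_real (g x) \<partial>M)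
     = complex_of_real (integral\<^sup>L M f) + \<i> * complex_of_real (integral\<^sup>L M g)"
  using assms by (simp add: integral_add integral_mult_right_zero)

lemma R_props:
  fixes M :: "('i\<Rightarrow>real) measure"
  assumes sM: "sets M = sets (PiM I (\<lambda>_. borel))" and fM: "finite_measure M" and j: "j\<in>I"
   and pm: "p \<in> borel_measurable (PiM I (\<lambda>_. borel))" and pn: "\<And>y. 0 \<le> p y" and pi: "integrable M p"
  shows "finite_measure (distr (density M p) borel (\<lambda>y. y j))"
   and "\<And>f::real\<Rightarrow>'b::{banach,second_countable_topology}. f \<in> borel_measurable borel \<Longrightarrow>
     integral\<^sup>L (distr (density M p) borel (\<lambda>y. y j)) f = (\<integral>y. p y *\<^sub>R f (y j) \<partial>M)"
proof -
  have pM: "p \<in> borel_measurable M" using pm measurable_cong_sets[OF sM refl] by auto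
  have "(\<lambda>y. y j) \<in> measurable (PiM I (\<lambda>_. borel)) borel"
    using measurable_component_singleton[OF j, of "\<lambda>_. borel"] by simp
  then have jM: "(\<lambda>y. y j) \<in> measurable M borel" using measurable_cong_sets[OF sM refl] by auto
  then have jD: "(\<lambda>y. y j) \<in> measurable (density M p) borel"
    using measurable_cong_sets[OF sets_density refl] by auto
  show "finite_measure (distr (density M p) borel (\<lambda>y. y j))"
  proof (rule finite_measure.finite_measure_distr[OF _ jD])
    show "finite_measure (density M p)"
    proof (rule finite_measureI)
      have "emeasure (density M p) (space (density M p)) = (\<integral>\<^sup>+x. ennreal (p x) * indicator (space M) x \<partial>M)"
        using pM by (simp add: emeasure_density)
      also have "\<dots> = (\<integral>\<^sup>+x. ennreal (p x) \<partial>M)"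
        by (intro nn_integral_cong) simp
      also have "\<dots> = ennreal (integral\<^sup>L M p)"
        by (rule nn_integral_eq_integral[OF pi]) (simp add: pn)
      finally show "emeasure (density M p) (space (density M p)) \<noteq> \<infinity>" by simp
    qed
  qed
  fix f :: "real\<Rightarrow>'b::{banach,second_countable_topology}"
  assume f: "f \<in> borel_measurable borel"
  have "integral\<^sup>L (distr (density M p) borel (\<lambda>y. y j)) f = (\<integral>y. f (y j) \<partial>density M p)"
    by (rule integral_distr[OF jD f])
  also have "\<dots> = (\<integral>y. p y *\<^sub>R f (y j) \<partial>M)"
    by (rule integral_density) (use jM f pM pn in auto)
  finally show "integral\<^sup>L (distr (density M p) borel (\<lambda>y. y j)) f = (\<integral>y. p y *\<^sub>R f (y j) \<partial>M)" .
qed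

locale two_fm =
  fixes I :: "'i set" and \<mu> \<nu> :: "('i \<Rightarrow> real) measure"
  assumes fin: "finite I" and fm1: "finite_measure \<mu>" and fm2: "finite_measure \<nu>"
    and s1: "sets \<mu> = sets (PiM I (\<lambda>_. borel))" and s2: "sets \<nu> = sets (PiM I (\<lambda>_. borel))"
begin

lemma meas1: "f \<in> borel_measurable (PiM I (\<lambda>_. borel)) \<Longrightarrow> f \<in> borel_measurable \<mu>"
  using measurable_cong_sets[OF s1 refl] by auto
lemma meas2: "f \<in> borel_measurable (PiM I (\<lambda>_. borel)) \<Longrightarrow> f \<in> borel_measurable \<nu>"
  using measurable_cong_sets[OF s2 refl] by auto

definition bm :: "(('i \<Rightarrow> real) \<Rightarrow> real) \<Rightarrow> bool" where
  "bm f \<longleftrightarrow> f \<in> borel_measurable (PiM I (\<lambda>_. borel)) \<and> (\<exists>B. \<forall>y. \<bar>f y\<bar> \<le> B)"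

lemma bm_int1: "bm f \<Longrightarrow> integrable \<mu> f"
proof -
  assume "bm f"
  then obtain B where "f \<in> borel_measurable (PiM I (\<lambda>_. borel))" "\<And>y. \<bar>f y\<bar> \<le> B"
    unfolding bm_def by blast
  then show ?thesis
    by (intro finite_measure.integrable_const_bound[OF fm1, of f B] meas1 AE_I2) auto
qed
lemma bm_int2: "bm f \<Longrightarrow> integrable \<nu> f"
proof -
  assume "bm f"
  then obtain B where "f \<in> borel_measurable (PiM I (\<lambda>_. borel))" "\<And>y. \<bar>f y\<bar> \<le> B"
    unfolding bm_def by blast
  then show ?thesis
    by (intro finite_measure.integrable_const_bound[OF fm2, of f B] meas2 AE_I2) auto
qed

lemma onedim:
  assumes j: "j \<in> I" and p: "bm p" and pn: "\<And>y. 0 \<le> p y"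
   and cs: "\<And>s. (\<integral>y. p y * cos (s * y j) \<partial>\<mu>) = (\<integral>y. p y * cos (s * y j) \<partial>\<nu>)"
   and sn: "\<And>s. (\<integral>y. p y * sin (s * y j) \<partial>\<mu>) = (\<integral>y. p y * sin (s * y j) \<partial>\<nu>)"
   and B: "B \<in> sets borel"
  shows "(\<integral>y. p y * indicator B (y j) \<partial>\<mu>) = (\<integral>y. p y * indicator B (y j) \<partial>\<nu>)"
proof -
  have pm: "p \<in> borel_measurable (PiM I (\<lambda>_. borel))" using p unfolding bm_def by blast
  note R1 = R_props[OF s1 fm1 j pm pn bm_int1[OF p]]
  note R2 = R_props[OF s2 fm2 j pm pn bm_int2[OF p]]
  have bmc: "bm (\<lambda>y. p y * cos (s * y j))" "bm (\<lambda>y. p y * sin (s * y j))" for s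
  proof -
    obtain C where C: "\<And>y. \<bar>p y\<bar> \<le> C" using p unfolding bm_def by blast
    have "(\<lambda>y. y j) \<in> measurable (PiM I (\<lambda>_. borel)) borel"
      using measurable_component_singleton[OF j, of "\<lambda>_. borel"] by simp
    then have m: "(\<lambda>y. p y * cos (s * y j)) \<in> borel_measurable (PiM I (\<lambda>_. borel))"
       "(\<lambda>y. p y * sin (s * y j)) \<in> borel_measurable (PiM I (\<lambda>_. borel))"
      using pm by measurable
    have "\<bar>p y * cos (s * y j)\<bar> \<le> C" "\<bar>p y * sin (s * y j)\<bar> \<le> C" for y
      using C[of y] abs_cos_le_one[of "s * y j"] abs_sin_le_one[of "s * y j"]
      by (auto simp: abs_mult intro: mult_le_one order_trans[OF mult_right_le_one_le] )
    then show "bm (\<lambda>y. p y * cos (s * y j))" "bm (\<lambda>y. p y * sin (s * y j))"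
      unfolding bm_def using m by blast+
  qed
  have "distr (density \<mu> p) borel (\<lambda>y. y j) = distr (density \<nu> p) borel (\<lambda>y. y j)"
  proof (rule char_unique_finite[OF R1(1) R2(1)])
    fix s
    have ie: "(\<lambda>x. iexp (s * x)) \<in> borel_measurable borel"
      by (intro borel_measurable_continuous_onI continuous_intros)
    have "(CLINT x|distr (density \<mu> p) borel (\<lambda>y. y j). iexp (s * x))
       = (CLINT y|\<mu>. complex_of_real (p y * cos (s * y j)) + \<i> * complex_of_real (p y * sin (s * y j)))"
      unfolding R1(2)[OF ie] iexp_split ..
    also have "\<dots> = complex_of_real (\<integral>y. p y * cos (s * y j) \<partial>\<mu>) + \<i> * complex_of_real (\<integral>y. p y * sin (s * y j) \<partial>\<mu>)"
      by (rule clint_split) (use bmc bm_int1 in auto)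
    also have "\<dots> = complex_of_real (\<integral>y. p y * cos (s * y j) \<partial>\<nu>) + \<i> * complex_of_real (\<integral>y. p y * sin (s * y j) \<partial>\<nu>)"
      using cs sn by simp
    also have "\<dots> = (CLINT y|\<nu>. complex_of_real (p y * cos (s * y j)) + \<i> * complex_of_real (p y * sin (s * y j)))"
      by (rule clint_split[symmetric]) (use bmc bm_int2 in auto)
    also have "\<dots> = (CLINT x|distr (density \<nu> p) borel (\<lambda>y. y j). iexp (s * x))"
      unfolding R2(2)[OF ie] iexp_split ..
    finally show "(CLINT x|distr (density \<mu> p) borel (\<lambda>y. y j). iexp (s * x)) =
        (CLINT x|distr (density \<nu> p) borel (\<lambda>y. y j). iexp (s * x))" .
  qed auto
  moreover have "(\<lambda>x. indicator B x :: real) \<in> borel_measurable borel" using B by simp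
  ultimately show ?thesis
    using R1(2)[of "\<lambda>x. indicator B x :: real"] R2(2)[of "\<lambda>x. indicator B x :: real"] by simp
qed


lemma bm_mult: "bm f \<Longrightarrow> bm g \<Longrightarrow> bm (\<lambda>y. f y * g y)"
proof -
  assume f: "bm f" and g: "bm g"
  then obtain B1 B2 where B1: "\<And>y. \<bar>f y\<bar> \<le> B1" and B2: "\<And>y. \<bar>g y\<bar> \<le> B2"
    and m: "f \<in> borel_measurable (PiM I (\<lambda>_. borel))" "g \<in> borel_measurable (PiM I (\<lambda>_. borel))"
    unfolding bm_def by blast
  have "\<bar>f y * g y\<bar> \<le> B1 * B2" for y
    unfolding abs_mult by (rule mult_mono) (use B1 B2 abs_ge_zero order_trans in blast)+
  then show ?thesis unfolding bm_def using m by auto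
qed

lemma bm_add: "bm f \<Longrightarrow> bm g \<Longrightarrow> bm (\<lambda>y. f y + g y)"
proof -
  assume f: "bm f" and g: "bm g"
  then obtain B1 B2 where B1: "\<And>y. \<bar>f y\<bar> \<le> B1" and B2: "\<And>y. \<bar>g y\<bar> \<le> B2"
    and m: "f \<in> borel_measurable (PiM I (\<lambda>_. borel))" "g \<in> borel_measurable (PiM I (\<lambda>_. borel))"
    unfolding bm_def by blast
  have "\<bar>f y + g y\<bar> \<le> B1 + B2" for y
    using B1[of y] B2[of y] by linarith
  then show ?thesis unfolding bm_def using m by auto
qed

lemma bm_const: "bm (\<lambda>y. c)"
  unfolding bm_def by auto

lemma bm_cos: "f \<in> borel_measurable (PiM I (\<lambda>_. borel)) \<Longrightarrow> bm (\<lambda>y. cos (f y))"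
  unfolding bm_def by (auto intro!: exI[of _ 1])

lemma bm_sin: "f \<in> borel_measurable (PiM I (\<lambda>_. borel)) \<Longrightarrow> bm (\<lambda>y. sin (f y))"
  unfolding bm_def by (auto intro!: exI[of _ 1])

lemma bm_wt: "J \<subseteq> I \<Longrightarrow> (\<And>j. j \<in> J \<Longrightarrow> A j \<in> sets borel) \<Longrightarrow> bm (wt A J)"
  unfolding bm_def using meas_wt wt_nonneg wt_le1
  by (metis abs_of_nonneg)

lemma meas_proj: "j \<in> I \<Longrightarrow> (\<lambda>y. y j) \<in> borel_measurable (PiM I (\<lambda>_. borel))"
  using measurable_component_singleton[of j I "\<lambda>_. borel"] by simp

lemma bm_ind: "j \<in> I \<Longrightarrow> B \<in> sets borel \<Longrightarrow> bm (\<lambda>y. indicator B (y j))"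
  unfolding bm_def
  by (auto intro!: exI[of _ 1] measurable_compose[OF meas_proj borel_measurable_indicator])

lemma lin3_cong:
  assumes "bm f1" "bm f2" "bm f3"
    "integral\<^sup>L \<mu> f1 = integral\<^sup>L \<nu> f1" "integral\<^sup>L \<mu> f2 = integral\<^sup>L \<nu> f2"
    "integral\<^sup>L \<mu> f3 = integral\<^sup>L \<nu> f3"
    "\<And>y. g y = a * f1 y + b * f2 y + c * f3 y"
  shows "integral\<^sup>L \<mu> g = integral\<^sup>L \<nu> g"
proof -
  have "g = (\<lambda>y. a * f1 y + b * f2 y + c * f3 y)" using assms(7) by auto
  then show ?thesis
    using integral_lin3[of \<mu> f1 f2 f3 \<nu>] assms bm_int1 bm_int2 by simp
qed

end


context two_fm begin

definition SS :: "'i set \<Rightarrow> bool" where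
  "SS J \<longleftrightarrow> (\<forall>A u. (\<forall>j\<in>J. A j \<in> sets borel) \<longrightarrow>
    (\<integral>y. wt A J y * cos (\<Sum>l\<in>I-J. u l * y l) \<partial>\<mu>) = (\<integral>y. wt A J y * cos (\<Sum>l\<in>I-J. u l * y l) \<partial>\<nu>) \<and>
    (\<integral>y. wt A J y * sin (\<Sum>l\<in>I-J. u l * y l) \<partial>\<mu>) = (\<integral>y. wt A J y * sin (\<Sum>l\<in>I-J. u l * y l) \<partial>\<nu>))"

lemma SS_step:
  assumes J: "J \<subseteq> I" and j: "j \<in> I" "j \<notin> J" and IH: "SS J"
  shows "SS (insert j J)"
  unfolding SS_def
proof (intro allI impI)
  fix A :: "'i \<Rightarrow> real set" and u :: "'i \<Rightarrow> real"
  assume A: "\<forall>j'\<in>insert j J. A j' \<in> sets borel"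
  define K where "K = I - insert j J"
  define v where "v y = (\<Sum>l\<in>K. u l * y l)" for y :: "'i \<Rightarrow> real"
  define w where "w = wt A J"
  have KI: "K \<subseteq> I" and jK: "j \<notin> K" unfolding K_def by auto
  have IJ: "I - J = insert j K" unfolding K_def using j by auto
  have fK: "finite K" using fin KI finite_subset by blast
  have sumeq: "(\<Sum>l\<in>I-J. (if l = j then s else c * u l) * y l) = s * y j + c * v y" for s c y
  proof -
    have "(\<Sum>l\<in>I-J. (if l = j then s else c * u l) * y l)
       = s * y j + (\<Sum>l\<in>K. (if l = j then s else c * u l) * y l)"
      unfolding IJ using fK jK by simp
    also have "(\<Sum>l\<in>K. (if l = j then s else c * u l) * y l) = (\<Sum>l\<in>K. c * (u l * y l))"
      using jK by (intro sum.cong) auto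
    finally show ?thesis unfolding v_def by (simp add: sum_distrib_left)
  qed
  have AJ: "\<forall>j'\<in>J. A j' \<in> sets borel" using A by auto
  have hc: "(\<integral>y. w y * cos (s * y j + c * v y) \<partial>\<mu>) = (\<integral>y. w y * cos (s * y j + c * v y) \<partial>\<nu>)"
    and hs: "(\<integral>y. w y * sin (s * y j + c * v y) \<partial>\<mu>) = (\<integral>y. w y * sin (s * y j + c * v y) \<partial>\<nu>)" for s c
    using IH AJ unfolding SS_def w_def
    by (auto simp only: sumeq dest!: spec[of _ A] spec[of _ "\<lambda>l. if l = j then s else c * u l"])
  have mv: "v \<in> borel_measurable (PiM I (\<lambda>_. borel))" unfolding v_def[abs_def] by (rule meas_lin[OF KI])
  have mj: "(\<lambda>y. y j) \<in> borel_measurable (PiM I (\<lambda>_. borel))" by (rule meas_proj[OF j(1)])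
  have bw: "bm w" unfolding w_def using bm_wt[OF J] AJ by auto
  have bc: "bm (\<lambda>y. w y * cos (s * y j + c * v y))" "bm (\<lambda>y. w y * sin (s * y j + c * v y))" for s c
    by (intro bm_mult bw bm_cos bm_sin; use mv mj in measurable)+
  have bv: "bm (\<lambda>y. cos (v y))" "bm (\<lambda>y. sin (v y))" using mv by (auto intro: bm_cos bm_sin)
  define p0 where "p0 y = w y" for y
  define p1 where "p1 y = w y * (1 + cos (v y))" for y
  define p2 where "p2 y = w y * (1 + sin (v y))" for y
  have bp: "bm p0" "bm p1" "bm p2" unfolding p0_def[abs_def] p1_def[abs_def] p2_def[abs_def]
    using bw bv by (auto intro!: bm_mult bm_add bm_const)
  have pn: "0 \<le> p0 y" "0 \<le> p1 y" "0 \<le> p2 y" for y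
  proof -
    have "0 \<le> 1 + cos (v y)" "0 \<le> 1 + sin (v y)"
      using cos_ge_minus_one[of "v y"] sin_ge_minus_one[of "v y"] by linarith+
    then show "0 \<le> p0 y" "0 \<le> p1 y" "0 \<le> p2 y"
      unfolding p0_def p1_def p2_def w_def using wt_nonneg[of A J y] by auto
  qed
  have ind: "(\<integral>y. p y * indicator B (y j) \<partial>\<mu>) = (\<integral>y. p y * indicator B (y j) \<partial>\<nu>)"
    if pP: "p \<in> {p0, p1, p2}" and B: "B \<in> sets borel" for p B
  proof -
    have cs: "(\<integral>y. p y * cos (s * y j) \<partial>\<mu>) = (\<integral>y. p y * cos (s * y j) \<partial>\<nu>)"
     and sn: "(\<integral>y. p y * sin (s * y j) \<partial>\<mu>) = (\<integral>y. p y * sin (s * y j) \<partial>\<nu>)" for s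
    proof -
      note H = lin3_cong[OF bc(1)[of s 0] bc(1)[of s 1] bc(1)[of s "-1"] hc hc hc]
               lin3_cong[OF bc(2)[of s 0] bc(2)[of s 1] bc(2)[of s "-1"] hs hs hs]
               lin3_cong[OF bc(1)[of s 0] bc(2)[of s 1] bc(2)[of s "-1"] hc hs hs]
               lin3_cong[OF bc(2)[of s 0] bc(1)[of s 1] bc(1)[of s "-1"] hs hc hc]
      consider "p = p0" | "p = p1" | "p = p2" using pP by auto
      then have "(\<integral>y. p y * cos (s * y j) \<partial>\<mu>) = (\<integral>y. p y * cos (s * y j) \<partial>\<nu>)
        \<and> (\<integral>y. p y * sin (s * y j) \<partial>\<mu>) = (\<integral>y. p y * sin (s * y j) \<partial>\<nu>)"
      proof cases
        case 1
        show ?thesis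
        proof
        show "(\<integral>y. p y * cos (s * y j) \<partial>\<mu>) = (\<integral>y. p y * cos (s * y j) \<partial>\<nu>)"
          by (rule H(1)[where a=1 and b=0 and c=0]) (simp add: 1 p0_def)
        show "(\<integral>y. p y * sin (s * y j) \<partial>\<mu>) = (\<integral>y. p y * sin (s * y j) \<partial>\<nu>)"
          by (rule H(2)[where a=1 and b=0 and c=0]) (simp add: 1 p0_def)
        qed
      next
        case 2
        show ?thesis
        proof
        show "(\<integral>y. p y * cos (s * y j) \<partial>\<mu>) = (\<integral>y. p y * cos (s * y j) \<partial>\<nu>)"
          by (rule H(1)[where a=1 and b="1/2" and c="1/2"]) (simp add: 2 p1_def cos_add cos_diff algebra_simps)
        show "(\<integral>y. p y * sin (s * y j) \<partial>\<mu>) = (\<integral>y. p y * sin (s * y j) \<partial>\<nu>)"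
          by (rule H(2)[where a=1 and b="1/2" and c="1/2"]) (simp add: 2 p1_def sin_add sin_diff algebra_simps)
        qed
      next
        case 3
        show ?thesis
        proof
        show "(\<integral>y. p y * cos (s * y j) \<partial>\<mu>) = (\<integral>y. p y * cos (s * y j) \<partial>\<nu>)"
          by (rule H(3)[where a=1 and b="1/2" and c="-1/2"]) (simp add: 3 p2_def sin_add sin_diff algebra_simps)
        show "(\<integral>y. p y * sin (s * y j) \<partial>\<mu>) = (\<integral>y. p y * sin (s * y j) \<partial>\<nu>)"
          by (rule H(4)[where a=1 and b="-1/2" and c="1/2"]) (simp add: 3 p2_def cos_add cos_diff algebra_simps)
        qed
      qed
      then show "(\<integral>y. p y * cos (s * y j) \<partial>\<mu>) = (\<integral>y. p y * cos (s * y j) \<partial>\<nu>)"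
       and "(\<integral>y. p y * sin (s * y j) \<partial>\<mu>) = (\<integral>y. p y * sin (s * y j) \<partial>\<nu>)" by auto
    qed
    have "bm p" using pP bp by auto
    moreover have "\<And>y. 0 \<le> p y" using pP pn by auto
    ultimately show ?thesis using onedim[OF j(1) _ _ cs sn B] by blast
  qed
  have Bj: "A j \<in> sets borel" using A by auto
  have bi: "bm (\<lambda>y. p y * indicator (A j) (y j))" if "bm p" for p
    using that bm_ind[OF j(1) Bj] by (rule bm_mult)
  have wins: "wt A (insert j J) y = indicator (A j) (y j) * w y" for y
    unfolding w_def wt_def using fin J j finite_subset[OF J fin] by simp
  have IJ2: "I - insert j J = K" unfolding K_def ..
  show "(\<integral>y. wt A (insert j J) y * cos (\<Sum>l\<in>I - insert j J. u l * y l) \<partial>\<mu>) =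
        (\<integral>y. wt A (insert j J) y * cos (\<Sum>l\<in>I - insert j J. u l * y l) \<partial>\<nu>) \<and>
        (\<integral>y. wt A (insert j J) y * sin (\<Sum>l\<in>I - insert j J. u l * y l) \<partial>\<mu>) =
        (\<integral>y. wt A (insert j J) y * sin (\<Sum>l\<in>I - insert j J. u l * y l) \<partial>\<nu>)"
    unfolding IJ2 v_def[symmetric]
  proof
    show "(\<integral>y. wt A (insert j J) y * cos (v y) \<partial>\<mu>) = (\<integral>y. wt A (insert j J) y * cos (v y) \<partial>\<nu>)"
      by (rule lin3_cong[OF bi[OF bp(2)] bi[OF bp(1)] bi[OF bp(1)] ind ind ind, where a=1 and b="-1" and c=0])
         (auto simp: Bj wins p0_def p1_def algebra_simps)
    show "(\<integral>y. wt A (insert j J) y * sin (v y) \<partial>\<mu>) = (\<integral>y. wt A (insert j J) y * sin (v y) \<partial>\<nu>)"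
      by (rule lin3_cong[OF bi[OF bp(3)] bi[OF bp(1)] bi[OF bp(1)] ind ind ind, where a=1 and b="-1" and c=0])
         (auto simp: Bj wins p0_def p2_def algebra_simps)
  qed
qed


lemma SS_base:
  assumes ch: "\<And>u. (CLINT y|\<mu>. iexp (\<Sum>l\<in>I. u l * y l)) = (CLINT y|\<nu>. iexp (\<Sum>l\<in>I. u l * y l))"
  shows "SS {}"
  unfolding SS_def
proof (intro allI impI)
  fix A :: "'i \<Rightarrow> real set" and u :: "'i \<Rightarrow> real"
  define v where "v y = (\<Sum>l\<in>I. u l * y l)" for y :: "'i \<Rightarrow> real"
  have mv: "v \<in> borel_measurable (PiM I (\<lambda>_. borel))" unfolding v_def[abs_def] by (rule meas_lin) simp
  have b: "bm (\<lambda>y. cos (v y))" "bm (\<lambda>y. sin (v y))" using mv by (auto intro: bm_cos bm_sin)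
  have e: "(\<lambda>y. iexp (v y)) = (\<lambda>y. complex_of_real (cos (v y)) + \<i> * complex_of_real (sin (v y)))"
    using iexp_split[of 1] by simp
  have "complex_of_real (\<integral>y. cos (v y) \<partial>\<mu>) + \<i> * complex_of_real (\<integral>y. sin (v y) \<partial>\<mu>)
      = complex_of_real (\<integral>y. cos (v y) \<partial>\<nu>) + \<i> * complex_of_real (\<integral>y. sin (v y) \<partial>\<nu>)"
  proof -
    have "(CLINT y|\<mu>. iexp (v y)) = complex_of_real (\<integral>y. cos (v y) \<partial>\<mu>) + \<i> * complex_of_real (\<integral>y. sin (v y) \<partial>\<mu>)"
      unfolding e by (rule clint_split) (use b bm_int1 in auto)
    moreover have "(CLINT y|\<nu>. iexp (v y)) = complex_of_real (\<integral>y. cos (v y) \<partial>\<nu>) + \<i> * complex_of_real (\<integral>y. sin (v y) \<partial>\<nu>)"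
      unfolding e by (rule clint_split) (use b bm_int2 in auto)
    moreover have "(CLINT y|\<mu>. iexp (v y)) = (CLINT y|\<nu>. iexp (v y))"
      using ch[of u] unfolding v_def .
    ultimately show ?thesis by simp
  qed
  then have "(\<integral>y. cos (v y) \<partial>\<mu>) = (\<integral>y. cos (v y) \<partial>\<nu>) \<and> (\<integral>y. sin (v y) \<partial>\<mu>) = (\<integral>y. sin (v y) \<partial>\<nu>)"
    by (simp add: complex_eq_iff)
  then show "(\<integral>y. wt A {} y * cos (\<Sum>l\<in>I - {}. u l * y l) \<partial>\<mu>) = (\<integral>y. wt A {} y * cos (\<Sum>l\<in>I - {}. u l * y l) \<partial>\<nu>) \<and>
       (\<integral>y. wt A {} y * sin (\<Sum>l\<in>I - {}. u l * y l) \<partial>\<mu>) = (\<integral>y. wt A {} y * sin (\<Sum>l\<in>I - {}. u l * y l) \<partial>\<nu>)"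
    by (simp add: wt_def v_def)
qed

lemma SS_all:
  assumes ch: "\<And>u. (CLINT y|\<mu>. iexp (\<Sum>l\<in>I. u l * y l)) = (CLINT y|\<nu>. iexp (\<Sum>l\<in>I. u l * y l))"
  shows "SS I"
proof -
  have "finite J \<Longrightarrow> J \<subseteq> I \<Longrightarrow> SS J" for J
  proof (induct J rule: finite_induct)
    case empty
    show ?case using SS_base[OF ch] .
  next
    case (insert j J)
    then show ?case by (intro SS_step) auto
  qed
  then show ?thesis using fin by blast
qed

lemma unique:
  assumes ch: "\<And>u. (CLINT y|\<mu>. iexp (\<Sum>l\<in>I. u l * y l)) = (CLINT y|\<nu>. iexp (\<Sum>l\<in>I. u l * y l))"
  shows "\<mu> = \<nu>"
proof (rule measure_eqI_PiM_finite[OF fin s1 s2])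
  fix A :: "'i \<Rightarrow> real set" assume A: "\<And>i. i \<in> I \<Longrightarrow> A i \<in> sets borel"
  have "(\<integral>y. wt A I y * cos (\<Sum>l\<in>I - I. (0::real) * y l) \<partial>\<mu>) = (\<integral>y. wt A I y * cos (\<Sum>l\<in>I - I. 0 * y l) \<partial>\<nu>)"
    using conjunct1[OF SS_all[OF ch, unfolded SS_def, rule_format, of A "\<lambda>_. 0"]] A by blast
  then have eq: "integral\<^sup>L \<mu> (wt A I) = integral\<^sup>L \<nu> (wt A I)" by simp
  have sp1: "space \<mu> = space (PiM I (\<lambda>_. borel))" using sets_eq_imp_space_eq[OF s1] .
  have sp2: "space \<nu> = space (PiM I (\<lambda>_. borel))" using sets_eq_imp_space_eq[OF s2] .
  have wi: "wt A I y = indicator (Pi\<^sub>E I A) y" if "y \<in> space (PiM I (\<lambda>_. borel))" for y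
  proof -
    have ext: "y \<in> extensional I" using that by (simp add: space_PiM PiE_def)
    show ?thesis
    proof (cases "\<forall>i\<in>I. y i \<in> A i")
      case True
      then have "y \<in> Pi\<^sub>E I A" using ext by (simp add: PiE_def Pi_def)
      moreover have "wt A I y = 1" unfolding wt_def using True by (intro prod.neutral) auto
      ultimately show ?thesis by simp
    next
      case False
      then obtain i where i: "i \<in> I" "y i \<notin> A i" by blast
      then have "y \<notin> Pi\<^sub>E I A" by (auto simp: PiE_def Pi_def)
      moreover have "wt A I y = 0" unfolding wt_def using i fin by (intro prod_zero) (auto intro!: bexI[of _ i])
      ultimately show ?thesis by simp
    qed
  qed
  have PA: "Pi\<^sub>E I A \<in> sets (PiM I (\<lambda>_. borel))" using A fin by (intro sets_PiM_I_finite) auto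
  have "integral\<^sup>L \<mu> (wt A I) = integral\<^sup>L \<mu> (indicator (Pi\<^sub>E I A))"
    by (rule Bochner_Integration.integral_cong) (auto simp: sp1 wi)
  also have "\<dots> = measure \<mu> (Pi\<^sub>E I A)" using PA s1 by (simp add: sets.Int_space_eq2)
  finally have e1: "integral\<^sup>L \<mu> (wt A I) = measure \<mu> (Pi\<^sub>E I A)" .
  have "integral\<^sup>L \<nu> (wt A I) = integral\<^sup>L \<nu> (indicator (Pi\<^sub>E I A))"
    by (rule Bochner_Integration.integral_cong) (auto simp: sp2 wi)
  also have "\<dots> = measure \<nu> (Pi\<^sub>E I A)" using PA s2 by (simp add: sets.Int_space_eq2)
  finally have e2: "integral\<^sup>L \<nu> (wt A I) = measure \<nu> (Pi\<^sub>E I A)" .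
  show "emeasure \<mu> (Pi\<^sub>E I A) = emeasure \<nu> (Pi\<^sub>E I A)"
    using eq e1 e2 finite_measure.emeasure_eq_measure[OF fm1] finite_measure.emeasure_eq_measure[OF fm2] by simp
next
  show "range (\<lambda>_::nat. \<Pi>\<^sub>E i\<in>I. space borel) \<subseteq> prod_algebra I (\<lambda>_. borel)"
    using space_in_prod_algebra[of I "\<lambda>_. borel"] by auto
  show "(\<Union>i::nat. \<Pi>\<^sub>E i\<in>I. space borel) = space (PiM I (\<lambda>_. borel))" by (simp add: space_PiM)
  show "emeasure \<mu> (\<Pi>\<^sub>E i\<in>I. space borel) \<noteq> \<infinity>" using finite_measure.emeasure_finite[OF fm1] by simp
qed

end


lemma fe_nonzero:
  fixes H :: "real \<Rightarrow> complex"
  assumes cont: "continuous_on {0..} H" and H0: "H 0 = 1"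
    and pw: "\<And>c n. c \<ge> 0 \<Longrightarrow> H (real n * c) = H c ^ n"
    and c: "c \<ge> 0"
  shows "H c \<noteq> 0"
proof
  assume Hc: "H c = 0"
  have z: "H (c / 2 ^ k) = 0" for k :: nat
  proof (induct k)
    case 0 then show ?case using Hc by simp
  next
    case (Suc k)
    have "H (c / 2 ^ k) = H (real 2 * (c / 2 ^ Suc k))" by simp
    also have "\<dots> = H (c / 2 ^ Suc k) ^ 2" using c by (intro pw) simp
    finally show ?case using Suc by simp
  qed
  have "(\<lambda>k. c / 2 ^ k) \<longlonglongrightarrow> 0"
    by (intro LIMSEQ_divide_realpow_zero) auto
  then have "(\<lambda>k. H (c / 2 ^ k)) \<longlonglongrightarrow> H 0"
    using c by (intro continuous_on_tendsto_compose[OF cont]) auto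
  then have "(\<lambda>k. 0::complex) \<longlonglongrightarrow> 1" using z H0 by simp
  then show False by (simp add: LIMSEQ_const_iff)
qed

lemma fe_main:
  fixes H :: "real \<Rightarrow> complex"
  assumes cont: "continuous_on {0..} H" and H0: "H 0 = 1"
    and pw2: "\<And>c n. c > 0 \<Longrightarrow> n \<ge> 2 \<Longrightarrow> H (real n * c) = H c ^ n"
    and a: "a \<ge> 0" and b: "b \<ge> 0"
  shows "H (a + b) = H a * H b"
proof -
  have pw: "H (real n * c) = H c ^ n" if c: "c \<ge> 0" for c n
  proof -
    consider "n = 0" | "n = 1" | "n \<ge> 2" by linarith
    then show ?thesis
    proof cases
      case 1 then show ?thesis using H0 by simp
    next
      case 2 then show ?thesis by simp
    next
      case 3
      show ?thesis
      proof (cases "c = 0")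
        case True then show ?thesis using H0 by simp
      next
        case False then show ?thesis using c 3 pw2 by simp
      qed
    qed
  qed
  have nz: "\<And>c. c \<ge> 0 \<Longrightarrow> H c \<noteq> 0" using fe_nonzero[OF cont H0 pw] by blast
  have nz': "\<And>z. z \<in> {0..} \<Longrightarrow> H z \<noteq> 0" using nz by simp
  obtain L0 where L0c: "continuous_on {0..} L0" and L0e: "\<And>x. x \<in> {0..} \<Longrightarrow> H x = exp (L0 x)"
    using continuous_logarithm_on_contractible[OF cont convex_imp_contractible[OF convex_real_interval(1)] nz']
    by blast
  define L where "L x = L0 x - L0 0" for x
  have Lc: "continuous_on {0..} L" unfolding L_def[abs_def] by (intro continuous_intros L0c)
  have L00: "L 0 = 0" unfolding L_def by simp
  have Le: "H x = exp (L x)" if "x \<ge> 0" for x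
  proof -
    have "exp (L0 0) = 1" using L0e[of 0] H0 by simp
    then show ?thesis using L0e[of x] that unfolding L_def by (simp add: exp_diff)
  qed
  have Ln: "L (real n * x) = of_nat n * L x" if x: "x \<ge> 0" for n x
  proof -
    define D where "D y = L (real n * y) - of_nat n * L y" for y
    have Dc: "continuous_on {0..} D" unfolding D_def[abs_def]
      by (intro continuous_intros continuous_on_compose2[OF Lc] Lc) auto
    have De: "exp (D y) = 1" if "y \<ge> 0" for y
    proof -
      have "exp (D y) * exp (of_nat n * L y) = exp (L (real n * y))"
        unfolding D_def by (simp add: exp_add[symmetric])
      also have "\<dots> = H (real n * y)" using Le[of "real n * y"] that by simp
      also have "\<dots> = H y ^ n" using pw that by simp
      also have "\<dots> = exp (of_nat n * L y)" using Le[OF that] by (simp add: exp_of_nat_mult)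
      finally show ?thesis by simp
    qed
    have "D constant_on {0..}"
    proof (rule continuous_discrete_range_constant_eq[THEN iffD1, rule_format])
      show "connected {0::real..}" by (simp add: is_interval_connected)
      show "continuous_on {0..} D \<and> (\<forall>x\<in>{0..}. \<exists>e>0. \<forall>y. y \<in> {0..} \<and> D y \<noteq> D x \<longrightarrow> e \<le> norm (D y - D x))"
      proof (intro conjI Dc ballI exI[of _ "2*pi"] allI impI)
        fix x y :: real assume "x \<in> {0..}" "y \<in> {0..} \<and> D y \<noteq> D x"
        then have xy: "exp (D x) = 1" "exp (D y) = 1" "D y \<noteq> D x" using De by auto
        then obtain k m :: int where k: "Re (D x) = 0" "Im (D x) = of_int (2 * k) * pi"
          and m: "Re (D y) = 0" "Im (D y) = of_int (2 * m) * pi" by (auto simp: exp_eq_1)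
        have "k \<noteq> m" using k m xy(3) by (auto simp: complex_eq_iff)
        then have "1 \<le> \<bar>real_of_int m - real_of_int k\<bar>" by linarith
        then have "2*pi*1 \<le> 2*pi*\<bar>real_of_int m - real_of_int k\<bar>" by (intro mult_left_mono) auto
        also have "\<dots> = \<bar>Im (D y - D x)\<bar>"
        proof -
          have "Im (D y - D x) = (2*pi) * (real_of_int m - real_of_int k)" using k m by (simp add: algebra_simps)
          then show ?thesis by (simp only: abs_mult) (simp add: pi_gt_zero less_imp_le)
        qed
        also have "\<dots> \<le> norm (D y - D x)" by (rule abs_Im_le_cmod)
        finally show "2*pi \<le> norm (D y - D x)" by simp
      qed simp
    qed
    then obtain y0 where y0: "\<And>z. z \<in> {0..} \<Longrightarrow> D z = y0" unfolding constant_on_def by blast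
    have "D x = D 0" using y0[of x] y0[of 0] x by simp
    also have "D 0 = 0" unfolding D_def using L00 by simp
    finally show ?thesis unfolding D_def by simp
  qed
  have Lq: "L (real m / real k) = (real m / real k) * L 1" if k: "k > 0" for m k :: nat
  proof -
    have "of_nat k * L (real m / real k) = L (real k * (real m / real k))"
      using Ln[of "real m / real k" k] by simp
    also have "\<dots> = L (real m * 1)" using k by simp
    also have "\<dots> = of_nat m * L 1" using Ln[of 1 m] by simp
    finally show ?thesis using k by (simp add: field_simps)
  qed
  have Lr: "L x = x * L 1" if x: "x \<ge> 0" for x
  proof -
    define r where "r k = real (nat \<lfloor>real (Suc k) * x\<rfloor>) / real (Suc k)" for k
    have r0: "r k \<ge> 0" for k unfolding r_def by simp
    have rl: "x - 1 / real (Suc k) \<le> r k" "r k \<le> x" for k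
    proof -
      have "real (nat \<lfloor>real (Suc k) * x\<rfloor>) = of_int \<lfloor>real (Suc k) * x\<rfloor>" using x by simp
      then have e: "r k = of_int \<lfloor>real (Suc k) * x\<rfloor> / real (Suc k)" unfolding r_def by simp
      have f1: "of_int \<lfloor>real (Suc k) * x\<rfloor> \<le> real (Suc k) * x" by (rule of_int_floor_le)
      have f2: "real (Suc k) * x - 1 \<le> of_int \<lfloor>real (Suc k) * x\<rfloor>" using real_of_int_floor_gt_diff_one by (simp add: less_imp_le)
      have "x - 1 / real (Suc k) = (real (Suc k) * x - 1) / real (Suc k)" by (simp add: field_simps)
      also have "\<dots> \<le> of_int \<lfloor>real (Suc k) * x\<rfloor> / real (Suc k)" by (rule divide_right_mono[OF f2]) simp
      finally show "x - 1 / real (Suc k) \<le> r k" unfolding e .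
      have "of_int \<lfloor>real (Suc k) * x\<rfloor> / real (Suc k) \<le> (real (Suc k) * x) / real (Suc k)"
        by (rule divide_right_mono[OF f1]) simp
      also have "\<dots> = x" by simp
      finally show "r k \<le> x" unfolding e .
    qed
    have "(\<lambda>k. x - 1 / real (Suc k)) \<longlonglongrightarrow> x - 0"
      by (intro tendsto_diff tendsto_const LIMSEQ_inverse_real_of_nat[unfolded inverse_eq_divide])
    then have rt: "r \<longlonglongrightarrow> x"
      using rl by (intro tendsto_sandwich[of "\<lambda>k. x - 1 / real (Suc k)" r sequentially "\<lambda>_. x"]) auto
    have "(\<lambda>k. L (r k)) \<longlonglongrightarrow> L x"
      using x r0 by (intro continuous_on_tendsto_compose[OF Lc rt]) auto
    moreover have "L (r k) = r k * L 1" for k unfolding r_def by (rule Lq) simp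
    then have "(\<lambda>k. L (r k)) = (\<lambda>k. complex_of_real (r k) * L 1)" by (rule ext)
    moreover have "(\<lambda>k. complex_of_real (r k) * L 1) \<longlonglongrightarrow> complex_of_real x * L 1"
      by (intro tendsto_intros rt)
    ultimately show ?thesis using LIMSEQ_unique by metis
  qed
  have "H (a + b) = exp (L (a + b))" using a b Le by simp
  also have "\<dots> = exp (of_real a * L 1 + of_real b * L 1)" using a b Lr[of "a+b"] by (simp add: algebra_simps)
  also have "\<dots> = exp (of_real a * L 1) * exp (of_real b * L 1)" by (simp add: exp_add)
  also have "\<dots> = H a * H b" using Le[OF a] Le[OF b] Lr[OF a] Lr[OF b] by simp
  finally show ?thesis .
qed


lemma iexp_diff_le: "norm (iexp a - iexp b) \<le> \<bar>a - b\<bar>"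
proof -
  have "\<i> * complex_of_real b + \<i> * complex_of_real (a - b) = \<i> * complex_of_real a"
    by (simp add: algebra_simps)
  then have e: "iexp b * iexp (a - b) = iexp a" by (metis exp_add)
  have "iexp a - iexp b = iexp b * (iexp (a - b) - 1)"
    unfolding right_diff_distrib e by simp
  then have "norm (iexp a - iexp b) = norm (iexp (a - b) - 1)" by (simp add: norm_mult)
  also have "\<dots> \<le> \<bar>a - b\<bar>" using iexp_approx1[of "a - b" 0] by simp
  finally show ?thesis .
qed

lemma iexp_diff_le2: "norm (iexp a - iexp b) \<le> 2"
proof -
  have "norm (iexp a - iexp b) \<le> norm (iexp a) + norm (iexp b)" by (rule norm_triangle_ineq4)
  also have "\<dots> = 2" by simp
  finally show ?thesis .
qed


lemma H_cont:
  fixes M :: "'a measure" and X :: "real \<Rightarrow> 'a \<Rightarrow> real"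
  assumes P: "prob_space M" and meas: "\<And>t. t \<ge> 0 \<Longrightarrow> X t \<in> borel_measurable M"
    and sc: "stoch_continuous M X" and fI: "finite I" and I0: "I \<subseteq> {0..}"
  shows "continuous_on {0..} (\<lambda>c. CLINT \<omega>|M. iexp (\<Sum>t\<in>I. u t * X (c*t) \<omega>))"
proof -
  interpret prob_space M by fact
  define A where "A c \<omega> = (\<Sum>t\<in>I. u t * X (c*t) \<omega>)" for c \<omega>
  have mA: "A c \<in> borel_measurable M" if c: "c \<ge> 0" for c
    unfolding A_def[abs_def]
  proof (intro borel_measurable_sum borel_measurable_times borel_measurable_const)
    fix t assume "t \<in> I"
    then show "X (c*t) \<in> borel_measurable M" using I0 c by (intro meas) auto
  qed
  have ie: "(\<lambda>x. iexp x) \<in> borel_measurable borel"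
    by (intro borel_measurable_continuous_onI continuous_intros)
  have mI: "(\<lambda>\<omega>. iexp (A c \<omega>)) \<in> borel_measurable M" if "c \<ge> 0" for c
    using measurable_compose[OF mA[OF that] ie] by simp
  have intI: "integrable M (\<lambda>\<omega>. iexp (A c \<omega>))" if "c \<ge> 0" for c
    by (rule integrable_const_bound[of _ 1]) (use mI[OF that] in auto)
  have ev: "{\<omega>\<in>space M. \<bar>X s \<omega> - X r \<omega>\<bar> > d} \<in> sets M" if "s \<ge> 0" "r \<ge> 0" for s r d
  proof -
    have [measurable]: "X s \<in> borel_measurable M" "X r \<in> borel_measurable M" using meas that by auto
    show ?thesis by measurable
  qed
  show ?thesis unfolding continuous_on_iff A_def[symmetric]
  proof (intro ballI allI impI)
    fix c \<epsilon> :: real assume c: "c \<in> {0..}" and \<epsilon>: "\<epsilon> > 0"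
    define U where "U = (\<Sum>t\<in>I. \<bar>u t\<bar>)"
    have U0: "U \<ge> 0" unfolding U_def by (intro sum_nonneg) auto
    define \<delta> where "\<delta> = \<epsilon> / (2*(U+1))"
    define \<eta> where "\<eta> = \<epsilon> / (4*(real (card I)+1))"
    have \<delta>0: "\<delta> > 0" unfolding \<delta>_def using \<epsilon> U0 by auto
    have \<eta>0: "\<eta> > 0" unfolding \<eta>_def using \<epsilon> by auto
    have U\<delta>: "U * \<delta> < \<epsilon> / 2"
    proof -
      have "U * \<delta> = (\<epsilon> / 2) * (U / (U + 1))" unfolding \<delta>_def using U0 by (simp add: field_simps)
      also have "\<dots> < (\<epsilon> / 2) * 1" using U0 \<epsilon> by (intro mult_strict_left_mono) auto
      finally show ?thesis by simp
    qed
    have C\<eta>: "2 * (real (card I) * \<eta>) < \<epsilon> / 2"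
    proof -
      have "2 * (real (card I) * \<eta>) = (\<epsilon> / 2) * (real (card I) / (real (card I) + 1))"
        unfolding \<eta>_def by (simp add: field_simps)
      also have "\<dots> < (\<epsilon> / 2) * 1" using \<epsilon> by (intro mult_strict_left_mono) auto
      finally show ?thesis by simp
    qed
    define p where "p t s = measure M {\<omega>\<in>space M. \<bar>X s \<omega> - X (c*t) \<omega>\<bar> > \<delta>}" for t s
    have "\<forall>t\<in>I. \<exists>d>0. \<forall>s\<in>{0..}. 0 < dist s (c*t) \<and> dist s (c*t) < d \<longrightarrow> dist (p t s) 0 < \<eta>"
    proof
      fix t assume t: "t \<in> I"
      then have "c*t \<ge> 0" using c I0 by auto
      then have "((\<lambda>s. p t s) \<longlongrightarrow> 0) (at (c*t) within {0..})"
        using sc \<delta>0 unfolding stoch_continuous_def p_def by blast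
      then show "\<exists>d>0. \<forall>s\<in>{0..}. 0 < dist s (c*t) \<and> dist s (c*t) < d \<longrightarrow> dist (p t s) 0 < \<eta>"
        unfolding Lim_within using \<eta>0 by blast
    qed
    then obtain D where D: "\<And>t. t \<in> I \<Longrightarrow> D t > 0"
      "\<And>t s. t \<in> I \<Longrightarrow> s \<ge> 0 \<Longrightarrow> 0 < dist s (c*t) \<Longrightarrow> dist s (c*t) < D t \<Longrightarrow> dist (p t s) 0 < \<eta>"
      by (metis (no_types, lifting) atLeast_iff bchoice)
    define d where "d = Min (insert 1 ((\<lambda>t. D t / (t+1)) ` I))"
    have d0: "d > 0" unfolding d_def using fI D(1) I0 by (subst Min_gr_iff) force+
    have dle: "d \<le> D t / (t+1)" if "t \<in> I" for t unfolding d_def using fI that by (intro Min_le) auto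
    show "\<exists>d>0. \<forall>c'\<in>{0..}. dist c' c < d \<longrightarrow> dist (CLINT \<omega>|M. iexp (A c' \<omega>)) (CLINT \<omega>|M. iexp (A c \<omega>)) < \<epsilon>"
    proof (intro exI[of _ d] conjI d0 ballI impI)
      fix c' assume c': "c' \<in> {0..}" and cd: "dist c' c < d"
      have pt: "p t (c'*t) \<le> \<eta>" if t: "t \<in> I" for t
      proof (cases "c'*t = c*t")
        case True
        then show ?thesis unfolding p_def True using \<eta>0 \<delta>0 by simp
      next
        case False
        have t0: "t \<ge> 0" using t I0 by auto
        have "dist (c'*t) (c*t) = t * dist c' c" using t0 by (simp add: dist_real_def abs_mult left_diff_distrib[symmetric])
        also have "\<dots> \<le> (t+1) * dist c' c" by (intro mult_right_mono) auto
        also have "\<dots> < (t+1) * d" using cd t0 by (intro mult_strict_left_mono) auto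
        also have "\<dots> \<le> (t+1) * (D t / (t+1))" using dle[OF t] t0 by (intro mult_left_mono) auto
        also have "\<dots> = D t" using t0 by simp
        finally have "dist (p t (c'*t)) 0 < \<eta>" using D(2)[OF t, of "c'*t"] False c' t0 by simp
        then show ?thesis by simp
      qed
      define Bad where "Bad = (\<Union>t\<in>I. {\<omega>\<in>space M. \<bar>X (c'*t) \<omega> - X (c*t) \<omega>\<bar> > \<delta>})"
      have evt: "{\<omega>\<in>space M. \<bar>X (c'*t) \<omega> - X (c*t) \<omega>\<bar> > \<delta>} \<in> sets M" if "t \<in> I" for t
        using that I0 c c' by (intro ev) auto
      have Bad_ev: "Bad \<in> sets M" unfolding Bad_def using fI evt by auto
      have mB: "measure M Bad \<le> real (card I) * \<eta>"
      proof -
        have "measure M Bad \<le> (\<Sum>t\<in>I. p t (c'*t))"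
          unfolding Bad_def p_def by (rule measure_UNION_le[OF fI evt])
        also have "\<dots> \<le> (\<Sum>t\<in>I. \<eta>)" using pt by (intro sum_mono) auto
        finally show ?thesis by simp
      qed
      have pw: "norm (iexp (A c' \<omega>) - iexp (A c \<omega>)) \<le> U * \<delta> + 2 * indicator Bad \<omega>" if "\<omega> \<in> space M" for \<omega>
      proof (cases "\<omega> \<in> Bad")
        case True
        then show ?thesis using iexp_diff_le2 U0 \<delta>0 by (simp add: add_increasing)
      next
        case False
        then have small: "\<bar>X (c'*t) \<omega> - X (c*t) \<omega>\<bar> \<le> \<delta>" if "t \<in> I" for t
          using that \<open>\<omega> \<in> space M\<close> unfolding Bad_def by force
        have "norm (iexp (A c' \<omega>) - iexp (A c \<omega>)) \<le> \<bar>A c' \<omega> - A c \<omega>\<bar>" by (rule iexp_diff_le)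
        also have "A c' \<omega> - A c \<omega> = (\<Sum>t\<in>I. u t * (X (c'*t) \<omega> - X (c*t) \<omega>))"
          unfolding A_def by (simp add: sum_subtractf right_diff_distrib)
        also have "\<bar>\<dots>\<bar> \<le> (\<Sum>t\<in>I. \<bar>u t * (X (c'*t) \<omega> - X (c*t) \<omega>)\<bar>)" by (rule sum_abs)
        also have "\<dots> \<le> (\<Sum>t\<in>I. \<bar>u t\<bar> * \<delta>)"
          using small by (intro sum_mono) (auto simp: abs_mult intro: mult_left_mono)
        also have "\<dots> = U * \<delta>" unfolding U_def by (simp add: sum_distrib_right)
        finally show ?thesis using False by simp
      qed
      have "dist (CLINT \<omega>|M. iexp (A c' \<omega>)) (CLINT \<omega>|M. iexp (A c \<omega>))
          = norm (CLINT \<omega>|M. iexp (A c' \<omega>) - iexp (A c \<omega>))"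
        unfolding dist_norm using intI c c' by (subst Bochner_Integration.integral_diff) auto
      also have "\<dots> \<le> (\<integral>\<omega>. norm (iexp (A c' \<omega>) - iexp (A c \<omega>)) \<partial>M)" by (rule integral_norm_bound)
      also have "\<dots> \<le> (\<integral>\<omega>. U * \<delta> + 2 * indicator Bad \<omega> \<partial>M)"
      proof (rule integral_mono)
        show "integrable M (\<lambda>\<omega>. norm (iexp (A c' \<omega>) - iexp (A c \<omega>)))"
          using intI c c' by auto
        show "integrable M (\<lambda>\<omega>. U * \<delta> + 2 * indicator Bad \<omega>)"
          using Bad_ev by (auto intro!: Bochner_Integration.integrable_add integrable_real_indicator simp: emeasure_eq_measure)
      qed (rule pw)
      also have "\<dots> = U * \<delta> + 2 * measure M Bad"
        using Bad_ev by (subst Bochner_Integration.integral_add) (auto simp: prob_space emeasure_eq_measure intro!: integrable_real_indicator)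
      also have "\<dots> < \<epsilon>" using U\<delta> C\<eta> mB by linarith
      finally show "dist (CLINT \<omega>|M. iexp (A c' \<omega>)) (CLINT \<omega>|M. iexp (A c \<omega>)) < \<epsilon>" .
    qed
  qed
qed


definition chf :: "'b measure \<Rightarrow> (real \<Rightarrow> 'b \<Rightarrow> real) \<Rightarrow> real set \<Rightarrow> (real \<Rightarrow> real) \<Rightarrow> complex" where
  "chf N Y I u = (CLINT \<omega>|N. iexp (\<Sum>t\<in>I. u t * Y t \<omega>))"

lemma iexp_meas: "(\<lambda>x. iexp x) \<in> borel_measurable borel"
  by (intro borel_measurable_continuous_onI continuous_intros)

lemma chf_distr:
  assumes fI: "finite I" and mY: "\<And>t. t \<in> I \<Longrightarrow> Y t \<in> borel_measurable N"
  shows "chf N Y I u = (CLINT y|distr N (PiM I (\<lambda>_. borel)) (\<lambda>\<omega>. \<lambda>t\<in>I. Y t \<omega>). iexp (\<Sum>l\<in>I. u l * y l))"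
proof -
  have mR: "(\<lambda>\<omega>. \<lambda>t\<in>I. Y t \<omega>) \<in> measurable N (PiM I (\<lambda>_. borel))"
    by (rule measurable_restrict) (use mY in auto)
  have mf: "(\<lambda>y. iexp (\<Sum>l\<in>I. u l * y l)) \<in> borel_measurable (PiM I (\<lambda>_. borel))"
    using measurable_compose[OF meas_lin[where K=I and I=I and u=u] iexp_meas] by simp
  have "(CLINT y|distr N (PiM I (\<lambda>_. borel)) (\<lambda>\<omega>. \<lambda>t\<in>I. Y t \<omega>). iexp (\<Sum>l\<in>I. u l * y l))
     = (CLINT \<omega>|N. iexp (\<Sum>l\<in>I. u l * (\<lambda>t\<in>I. Y t \<omega>) l))"
    by (rule integral_distr[OF mR mf])
  also have "\<dots> = chf N Y I u" unfolding chf_def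
    by (intro Bochner_Integration.integral_cong refl arg_cong[where f=iexp] sum.cong) auto
  finally show ?thesis by simp
qed

lemma fdd_from_chf:
  assumes P1: "prob_space N1" and P2: "prob_space N2"
    and m1: "\<And>t. t \<ge> 0 \<Longrightarrow> Y1 t \<in> borel_measurable N1"
    and m2: "\<And>t. t \<ge> 0 \<Longrightarrow> Y2 t \<in> borel_measurable N2"
    and eq: "\<And>I u. finite I \<Longrightarrow> I \<subseteq> {0..} \<Longrightarrow> chf N1 Y1 I u = chf N2 Y2 I u"
  shows "fdd_eq N1 Y1 N2 Y2"
  unfolding fdd_eq_def
proof (intro allI impI)
  fix I :: "real set" assume I: "finite I \<and> I \<subseteq> {0..}"
  define \<mu> where "\<mu> = distr N1 (PiM I (\<lambda>_. borel)) (\<lambda>\<omega>. \<lambda>t\<in>I. Y1 t \<omega>)"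
  define \<nu> where "\<nu> = distr N2 (PiM I (\<lambda>_. borel)) (\<lambda>\<omega>. \<lambda>t\<in>I. Y2 t \<omega>)"
  have mI1: "\<And>t. t \<in> I \<Longrightarrow> Y1 t \<in> borel_measurable N1" using I m1 by auto
  have mI2: "\<And>t. t \<in> I \<Longrightarrow> Y2 t \<in> borel_measurable N2" using I m2 by auto
  have mR1: "(\<lambda>\<omega>. \<lambda>t\<in>I. Y1 t \<omega>) \<in> measurable N1 (PiM I (\<lambda>_. borel))"
    by (rule measurable_restrict) (use mI1 in auto)
  have mR2: "(\<lambda>\<omega>. \<lambda>t\<in>I. Y2 t \<omega>) \<in> measurable N2 (PiM I (\<lambda>_. borel))"
    by (rule measurable_restrict) (use mI2 in auto)
  have "prob_space \<mu>" unfolding \<mu>_def by (rule prob_space.prob_space_distr[OF P1 mR1])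
  then have f1: "finite_measure \<mu>" by (simp add: prob_space_def)
  have "prob_space \<nu>" unfolding \<nu>_def by (rule prob_space.prob_space_distr[OF P2 mR2])
  then have f2: "finite_measure \<nu>" by (simp add: prob_space_def)
  interpret two_fm I \<mu> \<nu>
  proof (rule two_fm.intro)
    show "finite I" using I by blast
    show "finite_measure \<mu>" by (rule f1)
    show "finite_measure \<nu>" by (rule f2)
    show "sets \<mu> = sets (PiM I (\<lambda>_. borel))" unfolding \<mu>_def by (rule sets_distr)
    show "sets \<nu> = sets (PiM I (\<lambda>_. borel))" unfolding \<nu>_def by (rule sets_distr)
  qed
  have "\<mu> = \<nu>"
  proof (rule unique)
    fix u
    show "(CLINT y|\<mu>. iexp (\<Sum>l\<in>I. u l * y l)) = (CLINT y|\<nu>. iexp (\<Sum>l\<in>I. u l * y l))"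
      unfolding \<mu>_def \<nu>_def using chf_distr[OF _ mI1, where u=u] chf_distr[OF _ mI2, where u=u] eq[of I u] I by simp
  qed
  then show "distr N1 (PiM I (\<lambda>_. borel)) (\<lambda>\<omega>. \<lambda>t\<in>I. Y1 t \<omega>) = distr N2 (PiM I (\<lambda>_. borel)) (\<lambda>\<omega>. \<lambda>t\<in>I. Y2 t \<omega>)"
    unfolding \<mu>_def \<nu>_def .
qed

lemma chf_from_fdd:
  assumes "fdd_eq N1 Y1 N2 Y2" "finite I" "I \<subseteq> {0..}"
    and m1: "\<And>t. t \<ge> 0 \<Longrightarrow> Y1 t \<in> borel_measurable N1"
    and m2: "\<And>t. t \<ge> 0 \<Longrightarrow> Y2 t \<in> borel_measurable N2"
  shows "chf N1 Y1 I u = chf N2 Y2 I u"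
proof -
  have mI1: "\<And>t. t \<in> I \<Longrightarrow> Y1 t \<in> borel_measurable N1" using assms m1 by auto
  have mI2: "\<And>t. t \<in> I \<Longrightarrow> Y2 t \<in> borel_measurable N2" using assms m2 by auto
  show ?thesis using chf_distr[OF _ mI1, where u=u] chf_distr[OF _ mI2, where u=u] assms unfolding fdd_eq_def by simp
qed


lemma chf_pair:
  fixes M :: "'a measure" and X :: "real \<Rightarrow> 'a \<Rightarrow> real"
  assumes P: "prob_space M" and meas: "\<And>t. t \<ge> 0 \<Longrightarrow> X t \<in> borel_measurable M"
    and a: "a \<ge> 0" and b: "b \<ge> 0" and fI: "finite I" and I0: "I \<subseteq> {0..}"
  shows "chf (M \<Otimes>\<^sub>M M) (\<lambda>t \<omega>. X (a * t) (fst \<omega>) + X (b * t) (snd \<omega>)) I u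
       = chf M (\<lambda>t. X (a * t)) I u * chf M (\<lambda>t. X (b * t)) I u"
proof -
  interpret prob_space M by fact
  interpret PP: pair_prob_space M M by unfold_locales
  define f where "f x = iexp (\<Sum>t\<in>I. u t * X (a * t) x)" for x
  define g where "g x = iexp (\<Sum>t\<in>I. u t * X (b * t) x)" for x
  have mlin: "(\<lambda>x. \<Sum>t\<in>I. u t * X (c * t) x) \<in> borel_measurable M" if c: "c \<ge> 0" for c
  proof (intro borel_measurable_sum borel_measurable_times borel_measurable_const)
    fix t assume "t \<in> I"
    then show "X (c*t) \<in> borel_measurable M" using I0 c by (intro meas) auto
  qed
  have mf: "f \<in> borel_measurable M" unfolding f_def[abs_def] using measurable_compose[OF mlin[OF a] iexp_meas] by simp
  have mg: "g \<in> borel_measurable M" unfolding g_def[abs_def] using measurable_compose[OF mlin[OF b] iexp_meas] by simp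
  have nf: "norm (f x) = 1" "norm (g x) = 1" for x unfolding f_def g_def by simp_all
  have intg: "integrable M g" by (rule integrable_const_bound[of _ 1]) (use mg nf in auto)
  have pe: "iexp (\<Sum>t\<in>I. u t * (X (a * t) x + X (b * t) y)) = f x * g y" for x y
  proof -
    have "(\<Sum>t\<in>I. u t * (X (a * t) x + X (b * t) y)) = (\<Sum>t\<in>I. u t * X (a * t) x) + (\<Sum>t\<in>I. u t * X (b * t) y)"
      by (simp add: distrib_left sum.distrib)
    then show ?thesis unfolding f_def g_def by (simp add: distrib_left exp_add)
  qed
  have mfg: "(\<lambda>\<omega>. f (fst \<omega>) * g (snd \<omega>)) \<in> borel_measurable (M \<Otimes>\<^sub>M M)"
    using mf mg by measurable
  have ifg: "integrable (M \<Otimes>\<^sub>M M) (\<lambda>\<omega>. f (fst \<omega>) * g (snd \<omega>))"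
    by (rule PP.P.integrable_const_bound[of _ 1]) (use mfg nf in \<open>auto simp: norm_mult\<close>)
  have "chf (M \<Otimes>\<^sub>M M) (\<lambda>t \<omega>. X (a * t) (fst \<omega>) + X (b * t) (snd \<omega>)) I u
      = (\<integral>\<omega>. f (fst \<omega>) * g (snd \<omega>) \<partial>(M \<Otimes>\<^sub>M M))"
    unfolding chf_def pe ..
  also have "\<dots> = (\<integral>x. (\<integral>y. f x * g y \<partial>M) \<partial>M)"
    using PP.integral_fst'[OF ifg] by simp
  also have "\<dots> = (\<integral>x. f x * integral\<^sup>L M g \<partial>M)"
    by (simp add: integral_mult_right_zero)
  also have "\<dots> = integral\<^sup>L M f * integral\<^sup>L M g"
    by (simp add: integral_mult_left_zero)
  also have "\<dots> = chf M (\<lambda>t. X (a * t)) I u * chf M (\<lambda>t. X (b * t)) I u"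
    unfolding chf_def f_def g_def ..
  finally show ?thesis .
qed

lemma chf_PiM:
  fixes M :: "'a measure" and X :: "real \<Rightarrow> 'a \<Rightarrow> real"
  assumes P: "prob_space M" and meas: "\<And>t. t \<ge> 0 \<Longrightarrow> X t \<in> borel_measurable M"
    and fI: "finite I" and I0: "I \<subseteq> {0..}"
  shows "chf (PiM {..<n} (\<lambda>_. M)) (\<lambda>t \<omega>. \<Sum>i<n. X t (\<omega> i)) I u = chf M X I u ^ n"
proof -
  interpret prob_space M by fact
  interpret PS: product_sigma_finite "\<lambda>_::nat. M" by unfold_locales
  define f where "f x = iexp (\<Sum>t\<in>I. u t * X t x)" for x
  have mlin: "(\<lambda>x. \<Sum>t\<in>I. u t * X t x) \<in> borel_measurable M"
  proof (intro borel_measurable_sum borel_measurable_times borel_measurable_const)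
    fix t assume "t \<in> I"
    then show "X t \<in> borel_measurable M" using I0 by (intro meas) auto
  qed
  have mf: "f \<in> borel_measurable M" unfolding f_def[abs_def] using measurable_compose[OF mlin iexp_meas] by simp
  have intf: "integrable M f" by (rule integrable_const_bound[of _ 1]) (use mf in \<open>auto simp: f_def\<close>)
  have pe: "iexp (\<Sum>t\<in>I. u t * (\<Sum>i<n. X t (\<omega> i))) = (\<Prod>i<n. f (\<omega> i))" for \<omega> :: "nat \<Rightarrow> 'a"
  proof -
    have "(\<Sum>t\<in>I. u t * (\<Sum>i<n. X t (\<omega> i))) = (\<Sum>i<n. \<Sum>t\<in>I. u t * X t (\<omega> i))"
      by (simp add: sum_distrib_left sum.swap[of _ I])
    then have "iexp (\<Sum>t\<in>I. u t * (\<Sum>i<n. X t (\<omega> i))) = exp (\<Sum>i<n. \<i> * complex_of_real (\<Sum>t\<in>I. u t * X t (\<omega> i)))"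
      by (simp add: sum_distrib_left)
    also have "\<dots> = (\<Prod>i<n. f (\<omega> i))" unfolding f_def by (simp add: exp_sum)
    finally show ?thesis .
  qed
  have "chf (PiM {..<n} (\<lambda>_. M)) (\<lambda>t \<omega>. \<Sum>i<n. X t (\<omega> i)) I u
      = (\<integral>\<omega>. (\<Prod>i<n. f (\<omega> i)) \<partial>PiM {..<n} (\<lambda>_. M))"
    unfolding chf_def pe ..
  also have "\<dots> = (\<Prod>i<n. integral\<^sup>L M f)"
    using PS.product_integral_prod[of "{..<n}" "\<lambda>_. f"] intf by simp
  also have "\<dots> = chf M X I u ^ n" unfolding chf_def f_def by simp
  finally show ?thesis .
qed


lemma meas_sum_proc:
  fixes M :: "'a measure" and X :: "real \<Rightarrow> 'a \<Rightarrow> real"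
    and n :: nat
  assumes meas: "\<And>t. t \<ge> 0 \<Longrightarrow> X t \<in> borel_measurable M" and t: "t \<ge> 0"
  shows "(\<lambda>\<omega>. \<Sum>i<n. X t (\<omega> i)) \<in> borel_measurable (PiM {..<n} (\<lambda>_. M))"
proof (rule borel_measurable_sum)
  fix i assume "i \<in> {..<n}"
  then show "(\<lambda>\<omega>. X t (\<omega> i)) \<in> borel_measurable (PiM {..<n} (\<lambda>_. M))"
    by (intro measurable_compose[OF measurable_component_singleton[of i "{..<n}" "\<lambda>_. M"] meas[OF t]])
qed

lemma meas_pair_proc:
  fixes M :: "'a measure" and X :: "real \<Rightarrow> 'a \<Rightarrow> real"
  assumes meas: "\<And>t. t \<ge> 0 \<Longrightarrow> X t \<in> borel_measurable M" and "a * t \<ge> 0" "b * t \<ge> 0"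
  shows "(\<lambda>\<omega>. X (a * t) (fst \<omega>) + X (b * t) (snd \<omega>)) \<in> borel_measurable (M \<Otimes>\<^sub>M M)"
proof -
  have [measurable]: "X (a * t) \<in> borel_measurable M" "X (b * t) \<in> borel_measurable M"
    using meas assms by auto
  show ?thesis by measurable
qed

lemma X0_one:
  fixes M :: "'a measure" and X :: "real \<Rightarrow> 'a \<Rightarrow> real"
  assumes P: "prob_space M" and meas: "\<And>t. t \<ge> 0 \<Longrightarrow> X t \<in> borel_measurable M"
    and ts: "time_stable M X"
  shows "(CLINT \<omega>|M. iexp (s * X 0 \<omega>)) = 1"
proof -
  interpret prob_space M by fact
  define D where "D = distr M borel (X 0)"
  have m0: "X 0 \<in> borel_measurable M" using meas by simp
  have rd: "real_distribution D"
    unfolding real_distribution_def real_distribution_axioms_def D_def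
    using prob_space_distr[OF m0] by simp
  have gD: "(CLINT \<omega>|M. iexp (s * X 0 \<omega>)) = char D s" for s
  proof -
    have "(\<lambda>x. iexp (s * x)) \<in> borel_measurable borel"
      by (intro borel_measurable_continuous_onI continuous_intros)
    then show ?thesis unfolding char_def D_def by (subst integral_distr[OF m0]) auto
  qed
  have c0: "chf M (\<lambda>t. X (c * t)) {0} (\<lambda>_. s) = char D s" for c s
    unfolding chf_def gD[symmetric] by simp
  have tsn: "fdd_eq (PiM {..<n} (\<lambda>_. M)) (\<lambda>t \<omega>. \<Sum>i<n. X t (\<omega> i)) M (\<lambda>t \<omega>. X (real n * t) \<omega>)"
    if "n \<ge> 2" for n
    using ts that unfolding time_stable_def by (elim allE[of _ n]) (erule mp)
  have sq: "char D s ^ 2 = char D s" for s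
  proof -
    have "fdd_eq (PiM {..<2::nat} (\<lambda>_. M)) (\<lambda>t \<omega>. \<Sum>i<(2::nat). X t (\<omega> i)) M (\<lambda>t \<omega>. X (real (2::nat) * t) \<omega>)"
      by (rule tsn) simp
    then have "chf (PiM {..<2::nat} (\<lambda>_. M)) (\<lambda>t \<omega>. \<Sum>i<(2::nat). X t (\<omega> i)) {0} (\<lambda>_. s)
       = chf M (\<lambda>t \<omega>. X (real (2::nat) * t) \<omega>) {0} (\<lambda>_. s)"
      by (rule chf_from_fdd) (auto intro: meas_sum_proc meas)
    moreover have "chf (PiM {..<2::nat} (\<lambda>_. M)) (\<lambda>t \<omega>. \<Sum>i<(2::nat). X t (\<omega> i)) {0} (\<lambda>_. s)
        = chf M X {0} (\<lambda>_. s) ^ 2"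
      by (rule chf_PiM[OF P meas]) auto
    moreover have "chf M X {0} (\<lambda>_. s) = char D s" using c0[of 1 s] by simp
    moreover have "chf M (\<lambda>t \<omega>. X (real (2::nat) * t) \<omega>) {0} (\<lambda>_. s) = char D s"
      using c0[of 2 s] by simp
    ultimately show ?thesis by simp
  qed
  have cD: "isCont (char D) x" for x using real_distribution.isCont_char[OF rd] .
  have cR: "continuous_on S (\<lambda>x. Re (char D x))" for S
    by (intro continuous_at_imp_continuous_on ballI continuous_intros cD)
  have z1: "char D x = 0 \<or> char D x = 1" for x
  proof -
    have "char D x * (char D x - 1) = 0" using sq[of x] by (simp add: power2_eq_square algebra_simps)
    then show ?thesis by simp
  qed
  have ch0: "char D 0 = 1" using real_distribution.char_zero[OF rd] .
  have "char D s = 1"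
  proof (rule ccontr)
    assume "char D s \<noteq> 1"
    then have s0: "Re (char D s) = 0" using z1[of s] by auto
    have h: "\<exists>x. Re (char D x) = 1/2"
    proof (cases "s \<ge> 0")
      case True
      then show ?thesis using IVT2'[of "\<lambda>x. Re (char D x)" s "1/2" 0, OF _ _ True cR] s0 ch0 by auto
    next
      case False
      then show ?thesis using IVT'[of "\<lambda>x. Re (char D x)" s "1/2" 0, OF _ _ _ cR] s0 ch0 by auto
    qed
    then obtain x where "Re (char D x) = 1/2" by blast
    then show False using z1[of x] by auto
  qed
  then show ?thesis using gD by simp
qed

lemma chf_scale:
  assumes c: "c > 0"
  shows "chf M (\<lambda>t. X (c' * t)) ((\<lambda>t. c * t) ` I) (\<lambda>s. u (s / c)) = chf M (\<lambda>t. X ((c' * c) * t)) I u"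
proof -
  have inj: "inj_on (\<lambda>t. c * t) I" using c by (auto simp: inj_on_def)
  have "(\<Sum>s\<in>(\<lambda>t. c * t) ` I. u (s / c) * X (c' * s) \<omega>) = (\<Sum>t\<in>I. u t * X ((c' * c) * t) \<omega>)" for \<omega>
    using c by (simp add: sum.reindex[OF inj] mult.assoc)
  then show ?thesis unfolding chf_def by simp
qed


theorem proposition2p1:
  fixes M :: "'a measure" and X :: "real \<Rightarrow> 'a \<Rightarrow> real"
  assumes "prob_space M"
    and "\<And>t. t \<ge> 0 \<Longrightarrow> X t \<in> borel_measurable M"
    and "stoch_continuous M X"
  shows "time_stable M X \<longleftrightarrow>
    (\<forall>a>0. \<forall>b>0. fdd_eq (M \<Otimes>\<^sub>M M) (\<lambda>t \<omega>. X (a * t) (fst \<omega>) + X (b * t) (snd \<omega>))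
                          M (\<lambda>t \<omega>. X ((a + b) * t) \<omega>))"
proof -
  note P = assms(1) and meas = assms(2) and sc = assms(3)
  interpret prob_space M by fact
  interpret PP: pair_prob_space M M by unfold_locales
  have PPp: "prob_space (M \<Otimes>\<^sub>M M)" by (rule PP.P.prob_space_axioms)
  have mc: "(\<lambda>\<omega>. X (c * t) \<omega>) \<in> borel_measurable M" if "c \<ge> 0" "t \<ge> 0" for c t
    using meas that by simp
  have mpair: "(\<lambda>\<omega>. X (a * t) (fst \<omega>) + X (b * t) (snd \<omega>)) \<in> borel_measurable (M \<Otimes>\<^sub>M M)"
    if "a > 0" "b > 0" "t \<ge> 0" for a b t
    using that by (intro meas_pair_proc[OF meas]) auto
  show ?thesis
  proof
    assume ts: "time_stable M X"
    show "\<forall>a>0. \<forall>b>0. fdd_eq (M \<Otimes>\<^sub>M M) (\<lambda>t \<omega>. X (a * t) (fst \<omega>) + X (b * t) (snd \<omega>))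
                          M (\<lambda>t \<omega>. X ((a + b) * t) \<omega>)"
    proof (intro allI impI)
      fix a b :: real assume a: "a > 0" and b: "b > 0"
      show "fdd_eq (M \<Otimes>\<^sub>M M) (\<lambda>t \<omega>. X (a * t) (fst \<omega>) + X (b * t) (snd \<omega>)) M (\<lambda>t \<omega>. X ((a + b) * t) \<omega>)"
      proof (rule fdd_from_chf[OF PPp P])
        show "\<And>t. t \<ge> 0 \<Longrightarrow> (\<lambda>\<omega>. X (a * t) (fst \<omega>) + X (b * t) (snd \<omega>)) \<in> borel_measurable (M \<Otimes>\<^sub>M M)"
          using mpair a b by blast
        show "\<And>t. t \<ge> 0 \<Longrightarrow> (\<lambda>\<omega>. X ((a + b) * t) \<omega>) \<in> borel_measurable M"
          using mc a b by simp
        fix I :: "real set" and u :: "real \<Rightarrow> real" assume fI: "finite I" and I0: "I \<subseteq> {0..}"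
        define H where "H c = chf M (\<lambda>t. X (c * t)) I u" for c
        have Hc: "continuous_on {0..} H"
          unfolding H_def[abs_def] chf_def by (rule H_cont[OF P meas sc fI I0])
        have H0: "H 0 = 1"
        proof -
          have "H 0 = (CLINT \<omega>|M. iexp ((\<Sum>t\<in>I. u t) * X 0 \<omega>))"
            unfolding H_def chf_def by (simp add: sum_distrib_right)
          also have "\<dots> = 1" by (rule X0_one[OF P meas ts])
          finally show ?thesis .
        qed
        have pw2: "H (real n * c) = H c ^ n" if c: "c > 0" and n: "n \<ge> 2" for c n
        proof -
          define J where "J = (\<lambda>t. c * t) ` I"
          define v where "v s = u (s / c)" for s
          have fJ: "finite J" unfolding J_def using fI by simp
          have J0: "J \<subseteq> {0..}" unfolding J_def using I0 c by auto
          have "fdd_eq (PiM {..<n} (\<lambda>_. M)) (\<lambda>t \<omega>. \<Sum>i<n. X t (\<omega> i)) M (\<lambda>t \<omega>. X (real n * t) \<omega>)"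
            using ts n unfolding time_stable_def by (elim allE[of _ n]) (erule mp)
          then have "chf (PiM {..<n} (\<lambda>_. M)) (\<lambda>t \<omega>. \<Sum>i<n. X t (\<omega> i)) J v
             = chf M (\<lambda>t \<omega>. X (real n * t) \<omega>) J v"
            by (rule chf_from_fdd[OF _ fJ J0]) (auto intro: meas_sum_proc meas)
          moreover have "chf (PiM {..<n} (\<lambda>_. M)) (\<lambda>t \<omega>. \<Sum>i<n. X t (\<omega> i)) J v = chf M X J v ^ n"
            by (rule chf_PiM[OF P meas fJ J0])
          moreover have "chf M X J v = H c"
            using chf_scale[OF c, of M X 1 I u] unfolding H_def J_def v_def by simp
          moreover have "chf M (\<lambda>t \<omega>. X (real n * t) \<omega>) J v = H (real n * c)"
            using chf_scale[OF c, of M X "real n" I u] unfolding H_def J_def v_def by simp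
          ultimately show ?thesis by simp
        qed
        have "H (a + b) = H a * H b"
          by (rule fe_main[OF Hc H0 pw2]) (use a b in auto)
        moreover have "chf (M \<Otimes>\<^sub>M M) (\<lambda>t \<omega>. X (a * t) (fst \<omega>) + X (b * t) (snd \<omega>)) I u = H a * H b"
          unfolding H_def by (rule chf_pair[OF P meas _ _ fI I0]) (use a b in auto)
        ultimately show "chf (M \<Otimes>\<^sub>M M) (\<lambda>t \<omega>. X (a * t) (fst \<omega>) + X (b * t) (snd \<omega>)) I u
            = chf M (\<lambda>t \<omega>. X ((a + b) * t) \<omega>) I u"
          unfolding H_def by simp
      qed
    qed
  next
    assume R: "\<forall>a>0. \<forall>b>0. fdd_eq (M \<Otimes>\<^sub>M M) (\<lambda>t \<omega>. X (a * t) (fst \<omega>) + X (b * t) (snd \<omega>))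
                          M (\<lambda>t \<omega>. X ((a + b) * t) \<omega>)"
    show "time_stable M X"
      unfolding time_stable_def
    proof (intro allI impI)
      fix n :: nat assume n: "n \<ge> 2"
      have PS: "prob_space (PiM {..<n} (\<lambda>_. M))" by (rule prob_space_PiM) (rule P)
      show "fdd_eq (PiM {..<n} (\<lambda>_. M)) (\<lambda>t \<omega>. \<Sum>i<n. X t (\<omega> i)) M (\<lambda>t \<omega>. X (real n * t) \<omega>)"
      proof (rule fdd_from_chf[OF PS P])
        show "\<And>t. t \<ge> 0 \<Longrightarrow> (\<lambda>\<omega>. \<Sum>i<n. X t (\<omega> i)) \<in> borel_measurable (PiM {..<n} (\<lambda>_. M))"
          by (rule meas_sum_proc[OF meas])
        show "\<And>t. t \<ge> 0 \<Longrightarrow> (\<lambda>\<omega>. X (real n * t) \<omega>) \<in> borel_measurable M"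
          using meas by simp
        fix I :: "real set" and u :: "real \<Rightarrow> real" assume fI: "finite I" and I0: "I \<subseteq> {0..}"
        define H where "H c = chf M (\<lambda>t. X (c * t)) I u" for c
        have add: "H (a + b) = H a * H b" if a: "a > 0" and b: "b > 0" for a b
        proof -
          have "fdd_eq (M \<Otimes>\<^sub>M M) (\<lambda>t \<omega>. X (a * t) (fst \<omega>) + X (b * t) (snd \<omega>)) M (\<lambda>t \<omega>. X ((a + b) * t) \<omega>)"
            using R a b by blast
          then have "chf (M \<Otimes>\<^sub>M M) (\<lambda>t \<omega>. X (a * t) (fst \<omega>) + X (b * t) (snd \<omega>)) I u
              = chf M (\<lambda>t \<omega>. X ((a + b) * t) \<omega>) I u"
            by (rule chf_from_fdd[OF _ fI I0]) (use mpair a b meas in auto)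
          moreover have "chf (M \<Otimes>\<^sub>M M) (\<lambda>t \<omega>. X (a * t) (fst \<omega>) + X (b * t) (snd \<omega>)) I u = H a * H b"
            unfolding H_def by (rule chf_pair[OF P meas _ _ fI I0]) (use a b in auto)
          ultimately show ?thesis unfolding H_def by simp
        qed
        have pow: "H (real (Suc k)) = H 1 ^ Suc k" for k
        proof (induct k)
          case 0 then show ?case by simp
        next
          case (Suc k)
          have "H (real (Suc (Suc k))) = H (real (Suc k) + 1)" by (simp add: add.commute)
          also have "\<dots> = H (real (Suc k)) * H 1" by (rule add) auto
          also have "\<dots> = H 1 ^ Suc (Suc k)" using Suc by simp
          finally show ?case .
        qed
        have "chf (PiM {..<n} (\<lambda>_. M)) (\<lambda>t \<omega>. \<Sum>i<n. X t (\<omega> i)) I u = chf M X I u ^ n"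
          by (rule chf_PiM[OF P meas fI I0])
        also have "chf M X I u = H 1" unfolding H_def by simp
        also have "H 1 ^ n = H (real n)" using pow[of "n - 1"] n by simp
        also have "\<dots> = chf M (\<lambda>t \<omega>. X (real n * t) \<omega>) I u" unfolding H_def by simp
        finally show "chf (PiM {..<n} (\<lambda>_. M)) (\<lambda>t \<omega>. \<Sum>i<n. X t (\<omega> i)) I u
            = chf M (\<lambda>t \<omega>. X (real n * t) \<omega>) I u" .
      qed
    qed
  qed
qed


end
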